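(* For positive integers $m,n$: $\chi_{ei}(F_{m,n})=1$ if $m=1$ and $n=2$; $\chi_{ei}(F_{m,n})=m+1$ if $m\ge 2$ and $n=2$; and $\chi_{ei}(F_{m,n})=m+n$ if either $m=1$ and $n\ge 4$, or $m\ge 2$ and $n\ge 3$.
   Context: All graphs are finite and simple. The fan graph $F_{m,n}$ is the join $\overline{K}_m\vee P_n$ of the edgeless graph on $m$ vertices and the path on $n$ vertices, i.e. the disjoint union of these two graphs together with all edges between them. A path $P_4$ in $G$ is a sequence $uxyv$ of four distinct vertices with $ux,xy,yv\in E(G)$; $u,v$ are its end vertices. An $e$-injective $k$-coloring of $G$ is a function $f:V(G)\to\{1,\dots,k\}$ with $f(u)\ne f(v)$ whenever $u,v$ are the end vertices of some path $P_4$ in $G$; $\chi_{ei}(G)$ is the least such $k$. *)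

theory Defs
  imports Main
begin

text \<open>A finite simple graph is given by a vertex set V and a symmetric irreflexive
adjacency relation E (only its restriction to V matters).\<close>

definition is_P4 :: "'a set \<Rightarrow> ('a \<Rightarrow> 'a \<Rightarrow> bool) \<Rightarrow> 'a \<Rightarrow> 'a \<Rightarrow> 'a \<Rightarrow> 'a \<Rightarrow> bool" where
  "is_P4 V E u x y v \<longleftrightarrow> u \<in> V \<and> x \<in> V \<and> y \<in> V \<and> v \<in> V \<and>
     distinct [u, x, y, v] \<and> E u x \<and> E x y \<and> E y v"

definition e_injective_coloring ::
  "'a set \<Rightarrow> ('a \<Rightarrow> 'a \<Rightarrow> bool) \<Rightarrow> nat \<Rightarrow> ('a \<Rightarrow> nat) \<Rightarrow> bool" where
  "e_injective_coloring V E k f \<longleftrightarrow>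
     (\<forall>v\<in>V. f v \<in> {1..k}) \<and>
     (\<forall>u x y v. is_P4 V E u x y v \<longrightarrow> f u \<noteq> f v)"

definition chi_ei :: "'a set \<Rightarrow> ('a \<Rightarrow> 'a \<Rightarrow> bool) \<Rightarrow> nat" where
  "chi_ei V E = (LEAST k. \<exists>f. e_injective_coloring V E k f)"

text \<open>Fan graph F_{m,n} = complement of K_m joined with P_n.
  Vertices Inl i (i < m) form the edgeless part, Inr j (j < n) the path
  Inr 0 - Inr 1 - ... - Inr (n-1).\<close>

definition fan_V :: "nat \<Rightarrow> nat \<Rightarrow> (nat + nat) set" where
  "fan_V m n = Inl ` {..<m} \<union> Inr ` {..<n}"

fun fan_E :: "nat + nat \<Rightarrow> nat + nat \<Rightarrow> bool" where
  "fan_E (Inl i) (Inl j) = False"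
| "fan_E (Inl i) (Inr j) = True"
| "fan_E (Inr j) (Inl i) = True"
| "fan_E (Inr i) (Inr j) = (i + 1 = j \<or> j + 1 = i)"

end

theory Submission
  imports Defs
begin

lemma lower_card:
  assumes "finite S" "S \<subseteq> V" "e_injective_coloring V E k f"
    and "\<And>a b. a \<in> S \<Longrightarrow> b \<in> S \<Longrightarrow> a \<noteq> b \<Longrightarrow> \<exists>x y. is_P4 V E a x y b \<or> is_P4 V E b x y a"
  shows "card S \<le> k"
proof -
  have inj: "inj_on f S"
  proof (rule inj_onI, rule ccontr)
    fix a b assume ab: "a \<in> S" "b \<in> S" "f a = f b" "a \<noteq> b"
    then obtain x y where "is_P4 V E a x y b \<or> is_P4 V E b x y a" using assms(4) by blast
    then show False using assms(3) ab unfolding e_injective_coloring_def by metis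
  qed
  have "f ` S \<subseteq> {1..k}" using assms(2,3) unfolding e_injective_coloring_def by auto
  hence "card (f ` S) \<le> card {1..k}" by (intro card_mono) auto
  thus ?thesis using card_image[OF inj] by simp
qed

lemma chi_eq:
  assumes "\<exists>f. e_injective_coloring V E c f" "\<And>k f. e_injective_coloring V E k f \<Longrightarrow> c \<le> k"
  shows "chi_ei V E = c"
  unfolding chi_ei_def using assms by (intro Least_equality) auto

lemma inj_col:
  "e_injective_coloring (fan_V m n) fan_E (m+n)
     (\<lambda>v. case v of Inl i \<Rightarrow> i + 1 | Inr j \<Rightarrow> m + j + 1)"
  unfolding e_injective_coloring_def is_P4_def fan_V_def
  by (auto split: sum.splits)

lemma card_fan: "card (fan_V m n) = m + n"
  unfolding fan_V_def
  by (subst card_Un_disjoint) (auto simp: card_image)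

lemma finite_fan: "finite (fan_V m n)"
  unfolding fan_V_def by auto

lemma rr:
  assumes "m \<ge> 1" "n \<ge> 3" "i < n" "j < n" "i < j"
  shows "\<exists>x y. is_P4 (fan_V m n) fan_E (Inr i) x y (Inr j)"
proof (cases "j > i + 1")
  case True
  then show ?thesis using assms
    by (intro exI[of _ "Inr (i+1)"] exI[of _ "Inl 0"]) (auto simp: is_P4_def fan_V_def)
next
  case False
  hence j: "j = i + 1" using assms by simp
  show ?thesis
  proof (cases "i \<ge> 1")
    case True
    then show ?thesis using assms j
      by (intro exI[of _ "Inr (i-1)"] exI[of _ "Inl 0"]) (auto simp: is_P4_def fan_V_def)
  next
    case False
    hence "i = 0" by simp
    then show ?thesis using assms j
      by (intro exI[of _ "Inl 0"] exI[of _ "Inr 2"]) (auto simp: is_P4_def fan_V_def)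
  qed
qed

lemma rr':
  assumes "m \<ge> 1" "n \<ge> 3" "i < n" "j < n" "i \<noteq> j"
  shows "\<exists>x y. is_P4 (fan_V m n) fan_E (Inr i) x y (Inr j) \<or> is_P4 (fan_V m n) fan_E (Inr j) x y (Inr i)"
proof (cases "i < j")
  case True thus ?thesis using rr[OF assms(1,2,3,4)] by blast
next
  case False thus ?thesis using rr[OF assms(1,2,4,3)] assms(5) by fastforce
qed

lemma ll:
  assumes "n \<ge> 2" "i < m" "j < m"
  shows "is_P4 (fan_V m n) fan_E (Inl i) (Inr 0) (Inr 1) (Inl j) \<or> i = j"
  using assms by (auto simp: is_P4_def fan_V_def)

lemma lr:
  assumes "m \<ge> 2" "n \<ge> 2" "i < m" "j < n"
  shows "\<exists>x y. is_P4 (fan_V m n) fan_E (Inl i) x y (Inr j)"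
proof -
  obtain l where l: "l < m" "l \<noteq> i" using assms
    by (metis One_nat_def Suc_1 Suc_le_lessD less_2_cases_iff linorder_le_less_linear not_less_iff_gr_or_eq)
  obtain k where k: "k < n" "k \<noteq> j" using assms
    by (metis One_nat_def Suc_1 Suc_le_lessD less_2_cases_iff linorder_le_less_linear not_less_iff_gr_or_eq)
  show ?thesis using l k assms
    by (intro exI[of _ "Inr k"] exI[of _ "Inl l"]) (auto simp: is_P4_def fan_V_def)
qed

lemma lr1:
  assumes "n \<ge> 4" "j < n"
  shows "\<exists>x y. is_P4 (fan_V 1 n) fan_E (Inl 0) x y (Inr j)"
proof (cases "j \<ge> 2")
  case True thus ?thesis using assms
    by (intro exI[of _ "Inr (j-2)"] exI[of _ "Inr (j-1)"]) (auto simp: is_P4_def fan_V_def)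
next
  case False thus ?thesis using assms
    by (intro exI[of _ "Inr (j+2)"] exI[of _ "Inr (j+1)"]) (auto simp: is_P4_def fan_V_def)
qed

theorem proposition3p8:
  fixes m n :: nat
  assumes "m \<ge> 1" and "n \<ge> 1"
  shows "(m = 1 \<and> n = 2 \<longrightarrow> chi_ei (fan_V m n) fan_E = 1)
       \<and> (m \<ge> 2 \<and> n = 2 \<longrightarrow> chi_ei (fan_V m n) fan_E = m + 1)
       \<and> ((m = 1 \<and> n \<ge> 4) \<or> (m \<ge> 2 \<and> n \<ge> 3) \<longrightarrow> chi_ei (fan_V m n) fan_E = m + n)"
proof (intro conjI impI)
  assume h: "m = 1 \<and> n = 2"
  show "chi_ei (fan_V m n) fan_E = 1"
  proof (rule chi_eq)
    have V: "fan_V m n = {Inl 0, Inr 0, Inr 1}" using h by (auto simp: fan_V_def)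
    have "\<not> is_P4 (fan_V m n) fan_E u x y v" for u x y v
      unfolding V is_P4_def by auto
    thus "\<exists>f. e_injective_coloring (fan_V m n) fan_E 1 f"
      by (intro exI[of _ "\<lambda>_. 1"]) (auto simp: e_injective_coloring_def)
    show "1 \<le> k" if "e_injective_coloring (fan_V m n) fan_E k f" for k f
      using that V unfolding e_injective_coloring_def by (cases k) auto
  qed
next
  assume h: "m \<ge> 2 \<and> n = 2"
  show "chi_ei (fan_V m n) fan_E = m + 1"
  proof (rule chi_eq)
    show "\<exists>f. e_injective_coloring (fan_V m n) fan_E (m+1) f"
      using h
      by (intro exI[of _ "\<lambda>v. case v of Inl i \<Rightarrow> i + 1 | Inr j \<Rightarrow> m + 1"])
         (auto simp: e_injective_coloring_def is_P4_def fan_V_def split: sum.splits)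
    fix k f assume c: "e_injective_coloring (fan_V m n) fan_E k f"
    let ?S = "insert (Inr (0::nat)) (Inl ` {..<m}) :: (nat + nat) set"
    have "card ?S \<le> k"
    proof (rule lower_card[OF _ _ c])
      show "finite ?S" by simp
      show "?S \<subseteq> fan_V m n" using h by (auto simp: fan_V_def)
      fix a b assume ab: "a \<in> ?S" "b \<in> ?S" "a \<noteq> b"
      show "\<exists>x y. is_P4 (fan_V m n) fan_E a x y b \<or> is_P4 (fan_V m n) fan_E b x y a"
      proof -
        have L: "\<And>i j. i < m \<Longrightarrow> j < m \<Longrightarrow> i \<noteq> j \<Longrightarrow> \<exists>x y. is_P4 (fan_V m n) fan_E (Inl i) x y (Inl j)"
          using ll[of n _ m] h by blast
        have R: "\<And>i. i < m \<Longrightarrow> \<exists>x y. is_P4 (fan_V m n) fan_E (Inl i) x y (Inr 0)"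
          using lr[of m n _ 0] h by simp
        show ?thesis using ab L R by blast
      qed
    qed
    moreover have "card ?S = m + 1" by (subst card_insert_disjoint) (auto simp: card_image)
    ultimately show "m + 1 \<le> k" by simp
  qed
next
  assume h: "(m = 1 \<and> n \<ge> 4) \<or> (m \<ge> 2 \<and> n \<ge> 3)"
  show "chi_ei (fan_V m n) fan_E = m + n"
  proof (rule chi_eq)
    show "\<exists>f. e_injective_coloring (fan_V m n) fan_E (m+n) f" using inj_col by blast
    fix k f assume c: "e_injective_coloring (fan_V m n) fan_E k f"
    have "card (fan_V m n) \<le> k"
    proof (rule lower_card[OF finite_fan _ c])
      show "fan_V m n \<subseteq> fan_V m n" by simp
      fix a b assume ab: "a \<in> fan_V m n" "b \<in> fan_V m n" "a \<noteq> b"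
      show "\<exists>x y. is_P4 (fan_V m n) fan_E a x y b \<or> is_P4 (fan_V m n) fan_E b x y a"
      proof (cases a; cases b)
        fix i j assume a: "a = Inl i" and b: "b = Inl j"
        moreover have "i < m" "j < m" "i \<noteq> j" using ab a b by (auto simp: fan_V_def)
        ultimately show ?thesis using h ll[of n i m j] by fastforce
      next
        fix i j assume a: "a = Inl i" and b: "b = Inr j"
        moreover have "i < m" "j < n" using ab a b by (auto simp: fan_V_def)
        ultimately show ?thesis using h lr[of m n i j] lr1[of n j] by fastforce
      next
        fix i j assume a: "a = Inr i" and b: "b = Inl j"
        moreover have "j < m" "i < n" using ab a b by (auto simp: fan_V_def)
        ultimately show ?thesis using h lr[of m n j i] lr1[of n i] by fastforce
      next
        fix i j assume a: "a = Inr i" and b: "b = Inr j"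
        moreover have "i < n" "j < n" "i \<noteq> j" using ab a b by (auto simp: fan_V_def)
        ultimately show ?thesis using h rr'[of m n i j] assms by fastforce
      qed
    qed
    thus "m + n \<le> k" by (simp add: card_fan)
  qed
qed

end
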